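(* Let $A,B\colon\mathbb{R}_{>0}\to\mathbb{R}_{>0}$ be continuous functions that are eventually monotone decreasing and satisfy $\lim_{x\to\infty}A(x)=\lim_{x\to\infty}B(x)=0$. Let $(a_t)_{t\ge1}$ and $(b_t)_{t\ge1}$ be sequences in $\mathbb{R}_{>0}$ satisfying $a_{t+1}=a_t+A(a_t)$ and $b_{t+1}=b_t+B(b_t)$ for all $t$. If $\lim_{x\to\infty}A(x)/B(x)=1$, then $\lim_{t\to\infty}a_t/b_t=1$. *)

theory Defs
  imports "HOL-Analysis.Analysis"
begin

end

theory Submission
  imports Defs
begin

lemma seq_infty:
  fixes F :: "real \<Rightarrow> real" and a :: "nat \<Rightarrow> real"
  assumes cont: "continuous_on {0<..} F" and pos: "\<And>x. x>0 \<Longrightarrow> F x > 0"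
  and apos: "\<And>t. t\<ge>1 \<Longrightarrow> a t > 0" and arec: "\<And>t. t\<ge>1 \<Longrightarrow> a (t+1) = a t + F (a t)"
  shows "filterlim a at_top sequentially"
proof -
  define s where "s t = a (Suc t)" for t
  have srec: "s (Suc t) = s t + F (s t)" for t
    using arec[of "Suc t"] by (simp add: s_def)
  have spos: "s t > 0" for t using apos[of "Suc t"] by (simp add: s_def)
  have inc: "incseq s"
    by (rule incseq_SucI) (use srec spos pos in \<open>auto simp: less_imp_le\<close>)
  have "\<forall>Z. eventually (\<lambda>t. Z \<le> s t) sequentially"
  proof (rule ccontr)
    assume "\<not> (\<forall>Z. eventually (\<lambda>t. Z \<le> s t) sequentially)"
    then obtain Z where nZ: "\<not> eventually (\<lambda>t. Z \<le> s t) sequentially" by blast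
    have bnd: "s t \<le> Z" for t
    proof (rule ccontr)
      assume "\<not> s t \<le> Z"
      then have "\<forall>n\<ge>t. Z \<le> s n" using inc by (meson incseqD less_le_not_le order_trans nle_le)
      then show False using nZ by (auto simp: eventually_sequentially)
    qed
    obtain L where L: "s \<longlonglongrightarrow> L" using incseq_convergent[OF inc] bnd by blast
    have "L \<ge> s 0" using inc L by (simp add: incseq_le)
    then have Lp: "L > 0" using spos[of 0] by linarith
    have "isCont F L" using cont Lp by (simp add: continuous_on_eq_continuous_at)
    then have t1: "(\<lambda>t. F (s t)) \<longlonglongrightarrow> F L" using L by (rule isCont_tendsto_compose)
    have "(\<lambda>t. s (Suc t) - s t) \<longlonglongrightarrow> L - L"
      using L by (intro tendsto_diff) (auto intro: LIMSEQ_Suc)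
    then have "(\<lambda>t. F (s t)) \<longlonglongrightarrow> 0" by (simp add: srec)
    with t1 have "F L = 0" using LIMSEQ_unique by blast
    with pos[OF Lp] show False by simp
  qed
  then have "filterlim s at_top sequentially" by (simp add: filterlim_at_top)
  then show ?thesis unfolding s_def by (simp add: filterlim_sequentially_Suc)
qed

lemma gap:
  fixes F :: "real \<Rightarrow> real" and a c :: "nat \<Rightarrow> real"
  assumes mono: "\<And>x y. xzero \<le> x \<Longrightarrow> x \<le> y \<Longrightarrow> F y \<le> F x" and Fnn: "\<And>x. xzero \<le> x \<Longrightarrow> F x \<ge> 0"
  and ge: "\<And>t. t \<ge> T \<Longrightarrow> a t \<ge> xzero \<and> c t \<ge> xzero"
  and ar: "\<And>t. t\<ge>T \<Longrightarrow> a (Suc t) = a t + F (a t)"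
  and cr: "\<And>t. t\<ge>T \<Longrightarrow> c (Suc t) \<ge> c t + F (c t)"
  and tT: "t \<ge> T"
  shows "a t - c t \<le> max (a T - c T) (F xzero)"
  using tT
proof (induct t rule: dec_induct)
  case base
  then show ?case by simp
next
  case (step t)
  have g: "a t \<ge> xzero" "c t \<ge> xzero" using ge step(1) by auto
  show ?case
  proof (cases "a t \<le> c t")
    case True
    have "F (a t) \<le> F xzero" using mono g by simp
    moreover have "F (c t) \<ge> 0" using Fnn g by simp
    ultimately show ?thesis using ar[OF step(1)] cr[OF step(1)] True by linarith
  next
    case False
    have "F (a t) \<le> F (c t)" using mono g False by simp
    then show ?thesis using ar[OF step(1)] cr[OF step(1)] step(3) by linarith
  qed
qed

lemma ratio_upper:
  fixes A B :: "real \<Rightarrow> real" and a b :: "nat \<Rightarrow> real"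
  assumes contA: "continuous_on {0<..} A" and contB: "continuous_on {0<..} B"
    and posA: "\<And>x. x > 0 \<Longrightarrow> A x > 0" and posB: "\<And>x. x > 0 \<Longrightarrow> B x > 0"
    and decA: "\<exists>x0. \<forall>x y. x0 \<le> x \<and> x \<le> y \<longrightarrow> A y \<le> A x"
    and decB: "\<exists>x0. \<forall>x y. x0 \<le> x \<and> x \<le> y \<longrightarrow> B y \<le> B x"
    and apos: "\<And>t. t \<ge> 1 \<Longrightarrow> a t > 0" and bpos: "\<And>t. t \<ge> 1 \<Longrightarrow> b t > 0"
    and arec: "\<And>t. t \<ge> 1 \<Longrightarrow> a (t + 1) = a t + A (a t)"
    and brec: "\<And>t. t \<ge> 1 \<Longrightarrow> b (t + 1) = b t + B (b t)"
    and ev: "\<And>l. l > 1 \<Longrightarrow> eventually (\<lambda>x. A x \<le> l * B x) at_top"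
    and y: "y > 1"
  shows "eventually (\<lambda>t. a t / b t < y) sequentially"
proof -
  define l where "l = (1 + y) / 2"
  have l1: "l > 1" "l < y" using y by (auto simp: l_def)
  obtain x1 where x1: "\<And>x. x \<ge> x1 \<Longrightarrow> A x \<le> l * B x"
    using ev[OF l1(1)] by (auto simp: eventually_at_top_linorder)
  obtain xA where xA: "\<And>x y. xA \<le> x \<Longrightarrow> x \<le> y \<Longrightarrow> A y \<le> A x" using decA by blast
  obtain xB where xB: "\<And>x y. xB \<le> x \<Longrightarrow> x \<le> y \<Longrightarrow> B y \<le> B x" using decB by blast
  define X where "X = max (max xA xB) (max x1 1)"
  have ainf: "filterlim a at_top sequentially" by (rule seq_infty[where F=A and a=a, OF contA posA apos arec])
  have binf: "filterlim b at_top sequentially" by (rule seq_infty[where F=B and a=b, OF contB posB bpos brec])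
  have "eventually (\<lambda>t. X \<le> a t \<and> X \<le> b t) sequentially"
    using ainf binf by (auto simp: filterlim_at_top intro: eventually_conj)
  then obtain T0 where T0: "\<And>t. t \<ge> T0 \<Longrightarrow> X \<le> a t \<and> X \<le> b t"
    by (auto simp: eventually_sequentially)
  define T where "T = max T0 1"
  define c where "c t = l * b t" for t
  define K where "K = max (a T - c T) (A X)"
  have cge: "b t \<le> c t" if "t \<ge> T" for t
  proof -
    have "b t > 0" using bpos that by (auto simp: T_def)
    then show ?thesis using l1 by (simp add: c_def)
  qed
  have main: "a t - c t \<le> K" if "t \<ge> T" for t
    unfolding K_def
  proof (rule gap[where F=A and xzero=X])
    show "\<And>x y. X \<le> x \<Longrightarrow> x \<le> y \<Longrightarrow> A y \<le> A x" using xA by (simp add: X_def)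
    show "\<And>x. X \<le> x \<Longrightarrow> A x \<ge> 0" using posA by (simp add: X_def less_imp_le)
    show "\<And>t. t \<ge> T \<Longrightarrow> a t \<ge> X \<and> c t \<ge> X"
      using T0 cge by (force simp: T_def)
    show "\<And>t. t\<ge>T \<Longrightarrow> a (Suc t) = a t + A (a t)" using arec by (simp add: T_def)
    show "\<And>t. t\<ge>T \<Longrightarrow> c (Suc t) \<ge> c t + A (c t)"
    proof -
      fix t assume t: "t \<ge> T"
      have bt: "b t \<ge> X" "c t \<ge> X" "b t \<le> c t" using T0 cge t by (force simp: T_def)+
      have "c (Suc t) = c t + l * B (b t)" using brec[of t] t by (simp add: c_def T_def algebra_simps)
      moreover have "B (c t) \<le> B (b t)" using xB bt by (simp add: X_def)
      moreover have "A (c t) \<le> l * B (c t)" using x1 bt by (simp add: X_def)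
      ultimately show "c (Suc t) \<ge> c t + A (c t)" using l1
        by (smt (verit) mult_left_mono)
    qed
    show "t \<ge> T" by fact
  qed
  define Z where "Z = max 1 (\<bar>K\<bar> / (y - l)) + 1"
  have "eventually (\<lambda>t. Z \<le> b t) sequentially" using binf by (simp add: filterlim_at_top)
  moreover have "eventually (\<lambda>t. t \<ge> T) sequentially" by (simp add: eventually_ge_at_top)
  ultimately show ?thesis
  proof eventually_elim
    case (elim t)
    have bp: "b t > 0" "\<bar>K\<bar> / (y - l) < b t" using elim by (auto simp: Z_def)
    then have "\<bar>K\<bar> < (y - l) * b t" using l1 by (simp add: field_simps)
    moreover have "a t \<le> l * b t + K" using main[OF elim(2)] by (simp add: c_def)
    ultimately have "a t < y * b t" by (auto simp: algebra_simps)
    then show ?case using bp by (simp add: field_simps)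
  qed
qed

theorem lemma2:
  fixes A B :: "real \<Rightarrow> real" and a b :: "nat \<Rightarrow> real"
  assumes contA: "continuous_on {0<..} A" and contB: "continuous_on {0<..} B"
    and posA: "\<And>x. x > 0 \<Longrightarrow> A x > 0" and posB: "\<And>x. x > 0 \<Longrightarrow> B x > 0"
    and decA: "\<exists>x0. \<forall>x y. x0 \<le> x \<and> x \<le> y \<longrightarrow> A y \<le> A x"
    and decB: "\<exists>x0. \<forall>x y. x0 \<le> x \<and> x \<le> y \<longrightarrow> B y \<le> B x"
    and limA: "(A \<longlongrightarrow> 0) at_top" and limB: "(B \<longlongrightarrow> 0) at_top"
    and apos: "\<And>t. t \<ge> 1 \<Longrightarrow> a t > 0" and bpos: "\<And>t. t \<ge> 1 \<Longrightarrow> b t > 0"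
    and arec: "\<And>t. t \<ge> 1 \<Longrightarrow> a (t + 1) = a t + A (a t)"
    and brec: "\<And>t. t \<ge> 1 \<Longrightarrow> b (t + 1) = b t + B (b t)"
    and ratio: "((\<lambda>x. A x / B x) \<longlongrightarrow> 1) at_top"
  shows "(\<lambda>t. a t / b t) \<longlonglongrightarrow> 1"
proof -
  have ev1: "eventually (\<lambda>x. A x \<le> l * B x) at_top" if "l > 1" for l
  proof -
    have "eventually (\<lambda>x. A x / B x < l) at_top" using order_tendstoD(2)[OF ratio that] .
    moreover have "eventually (\<lambda>x. x > (0::real)) at_top" by (rule eventually_gt_at_top)
    ultimately show ?thesis
    proof eventually_elim
      case (elim x)
      then have "B x > 0" using posB by simp
      with elim show ?case by (simp add: field_simps)
    qed
  qed
  have ev2: "eventually (\<lambda>x. B x \<le> l * A x) at_top" if "l > 1" for l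
  proof -
    have "1 / l < 1" using that by simp
    then have "eventually (\<lambda>x. 1 / l < A x / B x) at_top" using order_tendstoD(1)[OF ratio] by blast
    moreover have "eventually (\<lambda>x. x > (0::real)) at_top" by (rule eventually_gt_at_top)
    ultimately show ?thesis
    proof eventually_elim
      case (elim x)
      then have "B x > 0" using posB by simp
      with elim that show ?case by (simp add: field_simps)
    qed
  qed
  have pos_ev: "eventually (\<lambda>t. a t > 0 \<and> b t > 0) sequentially"
    using apos bpos by (auto simp: eventually_sequentially intro!: exI[of _ 1])
  show ?thesis
  proof (rule order_tendstoI)
    fix y :: real assume "y > 1"
    then show "eventually (\<lambda>t. a t / b t < y) sequentially"
      using ratio_upper[where A=A and B=B and a=a and b=b and y=y, OF contA contB posA posB decA decB apos bpos arec brec ev1] by blast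
  next
    fix y :: real assume y: "y < 1"
    show "eventually (\<lambda>t. y < a t / b t) sequentially"
    proof (cases "y \<le> 0")
      case True
      from pos_ev show ?thesis by eventually_elim (use True in \<open>smt (verit) divide_pos_pos\<close>)
    next
      case False
      then have "1 / y > 1" using y by simp
      then have "eventually (\<lambda>t. b t / a t < 1 / y) sequentially"
        using ratio_upper[where A=B and B=A and a=b and b=a and y="1/y", OF contB contA posB posA decB decA bpos apos brec arec ev2] by blast
      with pos_ev show ?thesis
      proof eventually_elim
        case (elim t)
        then show ?case using False by (simp add: field_simps)
      qed
    qed
  qed
qed

end
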